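(* Let $X_1,\ldots,X_n$ be $\{0,1\}$-valued random variables satisfying negative regression. Let $K\subseteq[n]$, $a_K\in\{0,1\}^K$, and $i\in[n]\setminus K$ with $\Pr[X_K=a_K,X_i=0]>0$ and $\Pr[X_K=a_K,X_i=1]>0$. Let $L=[n]\setminus(K\cup\{i\})$ and for $c\in\{0,1\}$ let $\mu^{(c)}$ be the distribution on $\{0,1\}^L$ given by $\mu^{(c)}(x)=\Pr[X_L=x\mid X_K=a_K,X_i=c]$. Then there exists a function $\nu:\{0,1\}^L\times\{0,1\}^L\to[0,1]$ such that $\mu^{(1)}(x)=\sum_{y}\nu(x,y)$ for all $x$, $\mu^{(0)}(y)=\sum_x\nu(x,y)$ for all $y$, and $\nu(x,y)=0$ unless $x\le y$ coordinatewise.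
   Context: For $S\subseteq[n]$, $X_S\in\{0,1\}^S$ denotes the tuple $(X_i)_{i\in S}$. The variables $X_1,\ldots,X_n$ satisfy negative regression if for all disjoint $I,J\subseteq[n]$, every non-decreasing function $g:\{0,1\}^I\to\mathbb{R}$, and all $a\le b$ in $\{0,1\}^J$ (coordinatewise) such that $\Pr[X_J=a]>0$ and $\Pr[X_J=b]>0$, we have $\mathbb{E}[g(X_I)\mid X_J=a]\ge \mathbb{E}[g(X_I)\mid X_J=b]$. *)

theory Defs
  imports "HOL-Probability.Probability"
begin

text \<open>The random variables X_1, ..., X_n live on a discrete probability space P
  (an 'a pmf) and are given by X :: nat => 'a => bool (False = 0, True = 1).
  For S a set of indices, X_S is represented by the extensional function
  restricted to S; tuples in {0,1}^S are elements of S ->E UNIV.\<close>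

definition tup :: "(nat \<Rightarrow> 'a \<Rightarrow> bool) \<Rightarrow> nat set \<Rightarrow> 'a \<Rightarrow> (nat \<Rightarrow> bool)" where
  "tup X S \<omega> = restrict (\<lambda>j. X j \<omega>) S"

definition cond_exp :: "'a pmf \<Rightarrow> 'a set \<Rightarrow> ('a \<Rightarrow> real) \<Rightarrow> real" where
  "cond_exp P A f = measure_pmf.expectation P (\<lambda>\<omega>. indicator A \<omega> * f \<omega>) / measure_pmf.prob P A"

definition negative_regression :: "nat \<Rightarrow> 'a pmf \<Rightarrow> (nat \<Rightarrow> 'a \<Rightarrow> bool) \<Rightarrow> bool" where
  "negative_regression n P X \<longleftrightarrow>
     (\<forall>I J. I \<subseteq> {1..n} \<longrightarrow> J \<subseteq> {1..n} \<longrightarrow> I \<inter> J = {} \<longrightarrow>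
       (\<forall>g :: (nat \<Rightarrow> bool) \<Rightarrow> real. mono_on (I \<rightarrow>\<^sub>E (UNIV :: bool set)) g \<longrightarrow>
         (\<forall>a \<in> J \<rightarrow>\<^sub>E (UNIV :: bool set). \<forall>b \<in> J \<rightarrow>\<^sub>E (UNIV :: bool set).
            (\<forall>j\<in>J. a j \<le> b j) \<longrightarrow>
            measure_pmf.prob P {\<omega>. tup X J \<omega> = a} > 0 \<longrightarrow>
            measure_pmf.prob P {\<omega>. tup X J \<omega> = b} > 0 \<longrightarrow>
            cond_exp P {\<omega>. tup X J \<omega> = a} (\<lambda>\<omega>. g (tup X I \<omega>))
              \<ge> cond_exp P {\<omega>. tup X J \<omega> = b} (\<lambda>\<omega>. g (tup X I \<omega>)))))"

definition cond_dist :: "'a pmf \<Rightarrow> (nat \<Rightarrow> 'a \<Rightarrow> bool) \<Rightarrow> nat set \<Rightarrow> nat set \<Rightarrow> (nat \<Rightarrow> bool)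
    \<Rightarrow> nat \<Rightarrow> bool \<Rightarrow> (nat \<Rightarrow> bool) \<Rightarrow> real" where
  "cond_dist P X L K aK i c x =
     measure_pmf.prob P {\<omega>. tup X L \<omega> = x \<and> tup X K \<omega> = aK \<and> X i \<omega> = c}
     / measure_pmf.prob P {\<omega>. tup X K \<omega> = aK \<and> X i \<omega> = c}"

end

theory Submission
  imports Defs
begin


definition nb :: "('x \<Rightarrow> 'y \<Rightarrow> bool) \<Rightarrow> 'y set \<Rightarrow> 'x set \<Rightarrow> 'y set" where
  "nb R Y A = {y\<in>Y. \<exists>x\<in>A. R x y}"

definition hallc :: "('x \<Rightarrow> 'y \<Rightarrow> bool) \<Rightarrow> 'x set \<Rightarrow> 'y set \<Rightarrow> ('x \<Rightarrow> real) \<Rightarrow> ('y \<Rightarrow> real) \<Rightarrow> bool" where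
  "hallc R X Y p q \<longleftrightarrow> (\<forall>A\<subseteq>X. sum p A \<le> sum q (nb R Y A))"

definition coup :: "('x \<Rightarrow> 'y \<Rightarrow> bool) \<Rightarrow> 'x set \<Rightarrow> 'y set \<Rightarrow> ('x \<Rightarrow> real) \<Rightarrow> ('y \<Rightarrow> real) \<Rightarrow> ('x \<Rightarrow> 'y \<Rightarrow> real) \<Rightarrow> bool" where
  "coup R X Y p q \<nu> \<longleftrightarrow> (\<forall>x y. 0 \<le> \<nu> x y) \<and> (\<forall>x y. \<nu> x y \<noteq> 0 \<longrightarrow> x\<in>X \<and> y\<in>Y \<and> R x y)
     \<and> (\<forall>x\<in>X. sum (\<nu> x) Y = p x) \<and> (\<forall>y\<in>Y. (\<Sum>x\<in>X. \<nu> x y) \<le> q y)"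

lemma coup_cong:
  assumes "\<forall>x\<in>X. p x = p' x" "\<forall>y\<in>Y. q y = q' y" "coup R X Y p q \<nu>"
  shows "coup R X Y p' q' \<nu>"
  using assms unfolding coup_def by auto

lemma coup_mono:
  assumes c: "coup R X' Y' p q \<nu>" and "X' \<subseteq> X" "Y' \<subseteq> Y" "finite X" "finite Y"
    and "\<forall>x\<in>X-X'. p x = 0" and "\<forall>y\<in>Y-Y'. 0 \<le> q y"
  shows "coup R X Y p q \<nu>"
proof -
  from c have nn: "\<forall>x y. 0 \<le> \<nu> x y" and sup: "\<forall>x y. \<nu> x y \<noteq> 0 \<longrightarrow> x\<in>X' \<and> y\<in>Y' \<and> R x y"
    and row: "\<forall>x\<in>X'. sum (\<nu> x) Y' = p x" and col: "\<forall>y\<in>Y'. (\<Sum>x\<in>X'. \<nu> x y) \<le> q y"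
    unfolding coup_def by auto
  have "sum (\<nu> x) Y = p x" if "x \<in> X" for x
  proof (cases "x \<in> X'")
    case True
    have "sum (\<nu> x) Y = sum (\<nu> x) Y'"
      by (rule sum.mono_neutral_right) (use assms sup in auto)
    then show ?thesis using row True by simp
  next
    case False
    then have "\<forall>y. \<nu> x y = 0" using sup by blast
    then show ?thesis using False that assms by simp
  qed
  moreover have "(\<Sum>x\<in>X. \<nu> x y) \<le> q y" if "y \<in> Y" for y
  proof (cases "y \<in> Y'")
    case True
    have "(\<Sum>x\<in>X. \<nu> x y) = (\<Sum>x\<in>X'. \<nu> x y)"
      by (rule sum.mono_neutral_right) (use assms sup in auto)
    then show ?thesis using col True by simp
  next
    case False
    then have "\<forall>x. \<nu> x y = 0" using sup by blast
    then show ?thesis using False that assms by simp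
  qed
  ultimately show ?thesis using nn sup assms unfolding coup_def by blast
qed

lemma coup_add:
  assumes "coup R X Y p1 q1 \<nu>1" "coup R X Y p2 q2 \<nu>2"
  shows "coup R X Y (\<lambda>x. p1 x + p2 x) (\<lambda>y. q1 y + q2 y) (\<lambda>x y. \<nu>1 x y + \<nu>2 x y)"
  using assms unfolding coup_def
  by (auto simp: sum.distrib intro: add_mono add_nonneg_nonneg) (metis add.right_neutral)+

lemma coup_point:
  assumes "finite X" "finite Y" "x0\<in>X" "y0\<in>Y" "R x0 y0" "0 \<le> t"
  shows "coup R X Y (\<lambda>x. if x = x0 then t else 0) (\<lambda>y. if y = y0 then t else 0)
     (\<lambda>x y. if x = x0 \<and> y = y0 then t else 0)"
  using assms unfolding coup_def by auto

lemma hall_split: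
  assumes IH: "\<And>X' Y' p q. card X' + card Y' < card X + card Y \<Longrightarrow> finite X' \<Longrightarrow> finite Y'
      \<Longrightarrow> \<forall>x\<in>X'. 0 \<le> p x \<Longrightarrow> \<forall>y\<in>Y'. 0 \<le> q y \<Longrightarrow> hallc R X' Y' p q \<Longrightarrow> \<exists>\<nu>. coup R X' Y' p q \<nu>"
  and fin: "finite X" "finite Y" and pn: "\<forall>x\<in>X. 0 \<le> p x" and qn: "\<forall>y\<in>Y. 0 \<le> q y"
  and H: "hallc R X Y p q" and A: "A \<subseteq> X" "A \<noteq> {}" "A \<noteq> X"
  and tight: "sum p A = sum q (nb R Y A)"
  shows "\<exists>\<nu>. coup R X Y p q \<nu>"
proof -
  define N where "N = nb R Y A"
  have Nsub: "N \<subseteq> Y" unfolding nb_def N_def by auto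
  have finA: "finite A" using A fin finite_subset by auto
  have cA: "card A < card X" using A fin by (meson psubsetI psubset_card_mono)
  have cXA: "card (X - A) < card X" using A fin
    by (metis Diff_empty Diff_subset Int_absorb2 Diff_Int2 psubsetI psubset_card_mono Diff_eq_empty_iff double_diff subset_refl)
  have cN: "card N \<le> card Y" "card (Y - N) \<le> card Y" using Nsub fin by (auto intro: card_mono)
  have H1: "hallc R A N p q" unfolding hallc_def
  proof (intro allI impI)
    fix B assume B: "B \<subseteq> A"
    have "nb R N B = nb R Y B" using B unfolding nb_def N_def by auto
    then show "sum p B \<le> sum q (nb R N B)" using H B A unfolding hallc_def by auto
  qed
  have H2: "hallc R (X - A) (Y - N) p q" unfolding hallc_def
  proof (intro allI impI)
    fix B assume B: "B \<subseteq> X - A"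
    have finB: "finite B" using B fin finite_subset by blast
    have "sum p (A \<union> B) = sum p A + sum p B" using B finA finB by (intro sum.union_disjoint) auto
    moreover have "sum p (A \<union> B) \<le> sum q (nb R Y (A \<union> B))"
    proof -
      have "A \<union> B \<subseteq> X" using A B by auto
      then show ?thesis using H unfolding hallc_def by blast
    qed
    moreover have "nb R Y (A \<union> B) = N \<union> nb R (Y - N) B" unfolding nb_def N_def by auto
    moreover have "sum q (N \<union> nb R (Y - N) B) = sum q N + sum q (nb R (Y - N) B)"
      using fin Nsub by (intro sum.union_disjoint) (auto simp: nb_def intro: finite_subset)
    ultimately show "sum p B \<le> sum q (nb R (Y - N) B)" using tight unfolding N_def by (smt (verit))
  qed
  obtain \<nu>1 where c1: "coup R A N p q \<nu>1"
  proof -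
    have "finite N" using Nsub fin finite_subset by blast
    moreover have "\<forall>x\<in>A. 0 \<le> p x" "\<forall>y\<in>N. 0 \<le> q y" using pn qn A(1) Nsub by auto
    moreover have "card A + card N < card X + card Y" using cA cN by linarith
    ultimately show "(\<And>\<nu>1. coup R A N p q \<nu>1 \<Longrightarrow> thesis) \<Longrightarrow> thesis" using IH[of A N p q] finA H1 by blast
  qed
  obtain \<nu>2 where c2: "coup R (X - A) (Y - N) p q \<nu>2"
    using IH[of "X - A" "Y - N" p q] cXA cN fin pn qn H2 by auto
  have d1: "coup R X Y (\<lambda>x. if x\<in>A then p x else 0) (\<lambda>y. if y\<in>N then q y else 0) \<nu>1"
    apply (rule coup_mono[of _ A N])
    using c1 A Nsub fin by (auto intro: coup_cong)
  have d2: "coup R X Y (\<lambda>x. if x\<in>A then 0 else p x) (\<lambda>y. if y\<in>N then 0 else q y) \<nu>2"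
    apply (rule coup_mono[of _ "X - A" "Y - N"])
    using c2 A Nsub fin by (auto intro: coup_cong)
  have "coup R X Y (\<lambda>x. (if x\<in>A then p x else 0) + (if x\<in>A then 0 else p x))
     (\<lambda>y. (if y\<in>N then q y else 0) + (if y\<in>N then 0 else q y)) (\<lambda>x y. \<nu>1 x y + \<nu>2 x y)"
    by (rule coup_add[OF d1 d2])
  then have "coup R X Y p q (\<lambda>x y. \<nu>1 x y + \<nu>2 x y)" by (rule coup_cong[rotated 2]) auto
  then show ?thesis by blast
qed

lemma hall_main:
  "finite X \<Longrightarrow> finite Y \<Longrightarrow> \<forall>x\<in>X. 0 \<le> p x \<Longrightarrow> \<forall>y\<in>Y. 0 \<le> q y \<Longrightarrow> hallc R X Y p q
   \<Longrightarrow> \<exists>\<nu>. coup R X Y p q \<nu>"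
proof (induction "card X + card Y" arbitrary: X Y p q rule: less_induct)
  case less
  note fin = less.prems(1,2) and pn = less.prems(3) and qn = less.prems(4) and H = less.prems(5)
  have IH: "\<And>X' Y' p q. card X' + card Y' < card X + card Y \<Longrightarrow> finite X' \<Longrightarrow> finite Y'
      \<Longrightarrow> \<forall>x\<in>X'. 0 \<le> p x \<Longrightarrow> \<forall>y\<in>Y'. 0 \<le> q y \<Longrightarrow> hallc R X' Y' p q \<Longrightarrow> \<exists>\<nu>. coup R X' Y' p q \<nu>"
    using less.hyps by blast
  show ?case
  proof (cases "X = {}")
    case True
    have "coup R X Y p q (\<lambda>x y. 0)" using True qn unfolding coup_def by auto
    then show ?thesis by blast
  next
    case False
    then obtain x0 where x0: "x0 \<in> X" by blast
    have cX0: "card (X - {x0}) < card X" using x0 fin by (metis card_Diff1_less)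
    show ?thesis
    proof (cases "\<exists>y0\<in>Y. R x0 y0")
      case False
      have "nb R Y {x0} = {}" using False unfolding nb_def by auto
      moreover have "sum p {x0} \<le> sum q (nb R Y {x0})" using H x0 unfolding hallc_def by blast
      ultimately have "p x0 \<le> 0" by simp
      then have p0: "p x0 = 0" using pn x0 by force
      have "hallc R (X - {x0}) Y p q" using H unfolding hallc_def by auto
      then obtain \<nu> where "coup R (X - {x0}) Y p q \<nu>"
        using IH[of "X - {x0}" Y p q] cX0 fin pn qn by auto
      then have "coup R X Y p q \<nu>" by (rule coup_mono) (use fin p0 in auto)
      then show ?thesis by blast
    next
      case True
      then obtain y0 where y0: "y0 \<in> Y" "R x0 y0" by blast
      define S where "S = (\<lambda>A. sum q (nb R Y A) - sum p A) ` {A. A \<subseteq> X - {x0} \<and> y0 \<in> nb R Y A}"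
      have finS: "finite S" unfolding S_def using fin by auto
      define T where "T = insert (p x0) (insert (q y0) S)"
      define t where "t = Min T"
      have finT: "finite T" using finS T_def by auto
      have tT: "t \<in> T" unfolding t_def using finT T_def by (intro Min_in) auto
      have tle: "\<forall>s\<in>T. t \<le> s" unfolding t_def using finT by auto
      have Snn: "\<forall>s\<in>S. 0 \<le> s" using H unfolding S_def hallc_def by auto
      have t0: "0 \<le> t" using tT Snn pn qn x0 y0 unfolding T_def by auto
      have tp: "t \<le> p x0" and tq: "t \<le> q y0" using tle T_def by auto
      have tS: "\<And>A. A \<subseteq> X - {x0} \<Longrightarrow> y0 \<in> nb R Y A \<Longrightarrow> t \<le> sum q (nb R Y A) - sum p A"
        using tle unfolding T_def S_def by auto
      define p' where "p' = (\<lambda>x. p x - (if x = x0 then t else 0))"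
      define q' where "q' = (\<lambda>y. q y - (if y = y0 then t else 0))"
      have sp: "sum p' A = sum p A - (if x0 \<in> A then t else 0)" if "finite A" for A
        unfolding p'_def using that by (simp add: sum_subtractf)
      have sq: "sum q' B = sum q B - (if y0 \<in> B then t else 0)" if "finite B" for B
        unfolding q'_def using that by (simp add: sum_subtractf)
      have finnb: "finite (nb R Y A)" for A using fin unfolding nb_def by auto
      have pn': "\<forall>x\<in>X. 0 \<le> p' x" using pn tp unfolding p'_def by auto
      have qn': "\<forall>y\<in>Y. 0 \<le> q' y" using qn tq unfolding q'_def by auto
      have H': "hallc R X Y p' q'" unfolding hallc_def
      proof (intro allI impI)
        fix A assume A: "A \<subseteq> X"
        have finA: "finite A" using A fin finite_subset by blast
        have HA: "sum p A \<le> sum q (nb R Y A)" using H A unfolding hallc_def by auto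
        show "sum p' A \<le> sum q' (nb R Y A)"
        proof (cases "x0 \<in> A")
          case True
          then have "y0 \<in> nb R Y A" using y0 unfolding nb_def by auto
          then show ?thesis using True sp[OF finA] sq[OF finnb] HA by simp
        next
          case False
          show ?thesis
          proof (cases "y0 \<in> nb R Y A")
            case True
            then have "t \<le> sum q (nb R Y A) - sum p A" using tS A False by auto
            then show ?thesis using True False sp[OF finA] sq[OF finnb] by simp
          next
            case F2: False
            then show ?thesis using False sp[OF finA] sq[OF finnb] HA by simp
          qed
        qed
      qed
      have main: "\<exists>\<nu>. coup R X Y p' q' \<nu>"
      proof -
        consider "t = p x0" | "t = q y0" | "t \<in> S" using tT T_def by auto
        then show ?thesis
        proof cases
          case 1
          then have p0: "p' x0 = 0" unfolding p'_def by simp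
          have "hallc R (X - {x0}) Y p' q'" using H' unfolding hallc_def by auto
          then obtain \<nu> where "coup R (X - {x0}) Y p' q' \<nu>"
            using IH[of "X - {x0}" Y p' q'] cX0 fin pn' qn' by auto
          then have "coup R X Y p' q' \<nu>" by (rule coup_mono) (use fin p0 in auto)
          then show ?thesis by blast
        next
          case 2
          then have q0: "q' y0 = 0" unfolding q'_def by simp
          have cY0: "card (Y - {y0}) < card Y" using y0 fin by (metis card_Diff1_less)
          have "hallc R X (Y - {y0}) p' q'" unfolding hallc_def
          proof (intro allI impI)
            fix B assume B: "B \<subseteq> X"
            have e: "nb R (Y - {y0}) B = nb R Y B - {y0}" unfolding nb_def by auto
            have "sum q' (nb R (Y - {y0}) B) = sum q' (nb R Y B)"
              unfolding e using q0 finnb by (simp add: sum_diff1)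
            then show "sum p' B \<le> sum q' (nb R (Y - {y0}) B)" using H' B unfolding hallc_def by auto
          qed
          then obtain \<nu> where "coup R X (Y - {y0}) p' q' \<nu>"
            using IH[of X "Y - {y0}" p' q'] cY0 fin pn' qn' by auto
          then have "coup R X Y p' q' \<nu>" by (rule coup_mono) (use fin q0 in auto)
          then show ?thesis by blast
        next
          case 3
          then obtain A where A: "A \<subseteq> X - {x0}" "y0 \<in> nb R Y A" and tA: "t = sum q (nb R Y A) - sum p A"
            unfolding S_def by auto
          have finA: "finite A" using A fin finite_subset by blast
          have tight: "sum p' A = sum q' (nb R Y A)"
            using A tA sp[OF finA] sq[OF finnb] by auto
          have "A \<noteq> {}" using A unfolding nb_def by auto
          moreover have "A \<noteq> X" using A x0 by auto
          moreover have "A \<subseteq> X" using A by auto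
          ultimately show ?thesis by (intro hall_split[OF IH fin pn' qn' H' _ _ _ tight])
        qed
      qed
      then obtain \<nu> where c: "coup R X Y p' q' \<nu>" by blast
      have "coup R X Y (\<lambda>x. p' x + (if x = x0 then t else 0)) (\<lambda>y. q' y + (if y = y0 then t else 0))
          (\<lambda>x y. \<nu> x y + (if x = x0 \<and> y = y0 then t else 0))"
        by (rule coup_add[OF c coup_point]) (use fin x0 y0 t0 in auto)
      then have "coup R X Y p q (\<lambda>x y. \<nu> x y + (if x = x0 \<and> y = y0 then t else 0))"
        by (rule coup_cong[rotated 2]) (auto simp: p'_def q'_def)
      then show ?thesis by blast
    qed
  qed
qed



lemma prob_sum_tup:
  fixes P :: "'a pmf"
  assumes "finite U"
  shows "(\<Sum>x\<in>U. measure_pmf.prob P {\<omega>. f \<omega> = x \<and> Q \<omega>}) = measure_pmf.prob P {\<omega>. f \<omega> \<in> U \<and> Q \<omega>}"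
proof -
  have "{\<omega>. f \<omega> \<in> U \<and> Q \<omega>} = (\<Union>x\<in>U. {\<omega>. f \<omega> = x \<and> Q \<omega>})" by auto
  moreover have "measure_pmf.prob P (\<Union>x\<in>U. {\<omega>. f \<omega> = x \<and> Q \<omega>}) = (\<Sum>x\<in>U. measure_pmf.prob P {\<omega>. f \<omega> = x \<and> Q \<omega>})"
    using assms by (intro measure_pmf.finite_measure_finite_Union) (auto simp: disjoint_family_on_def)
  ultimately show ?thesis by simp
qed

lemma sum_cond_dist:
  assumes "U \<subseteq> L \<rightarrow>\<^sub>E (UNIV :: bool set)" "finite L"
  shows "(\<Sum>x\<in>U. cond_dist P X L K aK i c x) =
    measure_pmf.prob P {\<omega>. tup X L \<omega> \<in> U \<and> (tup X K \<omega> = aK \<and> X i \<omega> = c)}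
     / measure_pmf.prob P {\<omega>. tup X K \<omega> = aK \<and> X i \<omega> = c}"
proof -
  have "finite (L \<rightarrow>\<^sub>E (UNIV :: bool set))" using assms(2) by (simp add: finite_PiE)
  then have "finite U" using assms(1) finite_subset by blast
  then show ?thesis unfolding cond_dist_def
    by (simp add: sum_divide_distrib[symmetric] prob_sum_tup[where f="tup X L" and Q="\<lambda>\<omega>. tup X K \<omega> = aK \<and> X i \<omega> = c"])
qed

lemma tup_in: "tup X L \<omega> \<in> L \<rightarrow>\<^sub>E UNIV" unfolding tup_def by auto

lemma cond_exp_ind:
  "cond_exp P E (\<lambda>\<omega>. indicator U (f \<omega>) :: real) = measure_pmf.prob P {\<omega>. f \<omega> \<in> U \<and> \<omega> \<in> E} / measure_pmf.prob P E"
proof -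
  have "(\<lambda>\<omega>. indicator E \<omega> * indicator U (f \<omega>) :: real) = indicator {\<omega>. f \<omega> \<in> U \<and> \<omega> \<in> E}"
    by (auto simp: indicator_def fun_eq_iff)
  then show ?thesis unfolding cond_exp_def by simp
qed

lemma tup_insert:
  assumes "aK \<in> K \<rightarrow>\<^sub>E (UNIV :: bool set)" "i \<notin> K"
  shows "(tup X (insert i K) \<omega> = aK(i := c)) \<longleftrightarrow> (tup X K \<omega> = aK \<and> X i \<omega> = c)"
proof -
  have u: "\<And>j. j \<notin> K \<Longrightarrow> aK j = undefined" using assms(1) by (auto simp: PiE_def extensional_def)
  show ?thesis
  proof
    assume h: "tup X (insert i K) \<omega> = aK(i := c)"
    have "X i \<omega> = c" using fun_cong[OF h, of i] by (simp add: tup_def)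
    moreover have "tup X K \<omega> = aK"
    proof
      fix j show "tup X K \<omega> j = aK j"
        using fun_cong[OF h, of j] assms(2) u[of j] by (cases "j \<in> K"; cases "j = i"; auto simp: tup_def)
    qed
    ultimately show "tup X K \<omega> = aK \<and> X i \<omega> = c" by simp
  next
    assume h: "tup X K \<omega> = aK \<and> X i \<omega> = c"
    show "tup X (insert i K) \<omega> = aK(i := c)"
    proof
      fix j show "tup X (insert i K) \<omega> j = (aK(i := c)) j"
        using fun_cong[OF conjunct1[OF h], of j] conjunct2[OF h] assms(2) u[of j]
        by (cases "j \<in> K"; cases "j = i"; auto simp: tup_def)
    qed
  qed
qed

theorem mainTheorem3:
  fixes n :: nat and P :: "'a pmf" and X :: "nat \<Rightarrow> 'a \<Rightarrow> bool"
    and K :: "nat set" and aK :: "nat \<Rightarrow> bool" and i :: nat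
  assumes NR: "negative_regression n P X"
    and K: "K \<subseteq> {1..n}" and aK: "aK \<in> K \<rightarrow>\<^sub>E (UNIV :: bool set)"
    and i: "i \<in> {1..n} - K"
    and pos0: "measure_pmf.prob P {\<omega>. tup X K \<omega> = aK \<and> X i \<omega> = False} > 0"
    and pos1: "measure_pmf.prob P {\<omega>. tup X K \<omega> = aK \<and> X i \<omega> = True} > 0"
  defines "L \<equiv> {1..n} - (K \<union> {i})"
  shows "\<exists>\<nu> :: (nat \<Rightarrow> bool) \<Rightarrow> (nat \<Rightarrow> bool) \<Rightarrow> real.
           (\<forall>x \<in> L \<rightarrow>\<^sub>E (UNIV :: bool set). \<forall>y \<in> L \<rightarrow>\<^sub>E (UNIV :: bool set).
               0 \<le> \<nu> x y \<and> \<nu> x y \<le> 1 \<and> (\<not> (\<forall>j\<in>L. x j \<le> y j) \<longrightarrow> \<nu> x y = 0)) \<and>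
           (\<forall>x \<in> L \<rightarrow>\<^sub>E (UNIV :: bool set).
               cond_dist P X L K aK i True x = (\<Sum>y \<in> L \<rightarrow>\<^sub>E (UNIV :: bool set). \<nu> x y)) \<and>
           (\<forall>y \<in> L \<rightarrow>\<^sub>E (UNIV :: bool set).
               cond_dist P X L K aK i False y = (\<Sum>x \<in> L \<rightarrow>\<^sub>E (UNIV :: bool set). \<nu> x y))"
proof -
  define C where "C = L \<rightarrow>\<^sub>E (UNIV::bool set)"
  define R where "R = (\<lambda>x y. \<forall>j\<in>L. x j \<le> (y j::bool))"
  define p where "p = cond_dist P X L K aK i True"
  define q where "q = cond_dist P X L K aK i False"
  define E1 where "E1 = {\<omega>. tup X K \<omega> = aK \<and> X i \<omega> = True}"
  define E0 where "E0 = {\<omega>. tup X K \<omega> = aK \<and> X i \<omega> = False}"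
  have finL: "finite L" unfolding L_def by auto
  have finC: "finite C" unfolding C_def using finL by (simp add: finite_PiE)
  have iK: "i \<notin> K" using i by auto
  have pnn: "\<forall>x. 0 \<le> p x" unfolding p_def cond_dist_def by simp
  have qnn: "\<forall>x. 0 \<le> q x" unfolding q_def cond_dist_def by simp
  have p1: "p x \<le> 1" for x
  proof -
    have "measure_pmf.prob P {\<omega>. tup X L \<omega> = x \<and> tup X K \<omega> = aK \<and> X i \<omega> = True} \<le> measure_pmf.prob P E1"
      unfolding E1_def by (intro measure_pmf.finite_measure_mono) auto
    then show ?thesis using pos1 unfolding p_def cond_dist_def E1_def by simp
  qed
  have sp: "sum p C = 1"
  proof -
    have e: "{\<omega>. tup X L \<omega> \<in> C \<and> (tup X K \<omega> = aK \<and> X i \<omega> = True)} = {\<omega>. tup X K \<omega> = aK \<and> X i \<omega> = True}"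
      using tup_in[of X L] unfolding C_def by auto
    show ?thesis unfolding p_def using sum_cond_dist[of C L P X K aK i True] finL pos1 unfolding C_def e[unfolded C_def]
      by simp
  qed
  have sq: "sum q C = 1"
  proof -
    have e: "{\<omega>. tup X L \<omega> \<in> C \<and> (tup X K \<omega> = aK \<and> X i \<omega> = False)} = {\<omega>. tup X K \<omega> = aK \<and> X i \<omega> = False}"
      using tup_in[of X L] unfolding C_def by auto
    show ?thesis unfolding q_def using sum_cond_dist[of C L P X K aK i False] finL pos0 unfolding C_def e[unfolded C_def]
      by simp
  qed
  have dom: "sum p U \<le> sum q U" if U: "U \<subseteq> C" and up: "\<forall>x\<in>U. \<forall>y\<in>C. R x y \<longrightarrow> y \<in> U" for U
  proof -
    define J where "J = insert i K"
    define a where "a = aK(i := False)"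
    define b where "b = aK(i := True)"
    have u: "\<And>j. j \<notin> K \<Longrightarrow> aK j = undefined" using aK by (auto simp: PiE_def extensional_def)
    have IJ: "L \<subseteq> {1..n}" "J \<subseteq> {1..n}" "L \<inter> J = {}" using K i unfolding L_def J_def by auto
    have mono: "mono_on (L \<rightarrow>\<^sub>E (UNIV :: bool set)) (\<lambda>x. indicator U x :: real)"
    proof (rule mono_onI)
      fix r s :: "nat \<Rightarrow> bool" assume rs: "r \<in> L \<rightarrow>\<^sub>E UNIV" "s \<in> L \<rightarrow>\<^sub>E UNIV" "r \<le> s"
      have "R r s" using rs(3) unfolding R_def le_fun_def by blast
      moreover have "s \<in> C" using rs(2) unfolding C_def .
      ultimately have "r \<in> U \<Longrightarrow> s \<in> U" using up by blast
      then show "indicator U r \<le> (indicator U s :: real)" by (auto simp: indicator_def)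
    qed
    have ab: "a \<in> J \<rightarrow>\<^sub>E UNIV" "b \<in> J \<rightarrow>\<^sub>E UNIV" unfolding a_def b_def J_def using u by (auto simp: PiE_def extensional_def)
    have le: "\<forall>j\<in>J. a j \<le> b j" unfolding a_def b_def by auto
    have ea: "{\<omega>. tup X J \<omega> = a} = E0" unfolding E0_def J_def a_def by (simp add: tup_insert[OF aK iK])
    have eb: "{\<omega>. tup X J \<omega> = b} = E1" unfolding E1_def J_def b_def by (simp add: tup_insert[OF aK iK])
    have "cond_exp P E0 (\<lambda>\<omega>. indicator U (tup X L \<omega>))
          \<ge> cond_exp P E1 (\<lambda>\<omega>. indicator U (tup X L \<omega>))"
      using NR[unfolded negative_regression_def, rule_format, OF IJ mono ab le[rule_format], unfolded ea eb] pos0 pos1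
      unfolding E0_def E1_def by blast
    then have "measure_pmf.prob P {\<omega>. tup X L \<omega> \<in> U \<and> \<omega> \<in> E0} / measure_pmf.prob P E0
        \<ge> measure_pmf.prob P {\<omega>. tup X L \<omega> \<in> U \<and> \<omega> \<in> E1} / measure_pmf.prob P E1"
      unfolding cond_exp_ind .
    moreover have "sum p U = measure_pmf.prob P {\<omega>. tup X L \<omega> \<in> U \<and> \<omega> \<in> E1} / measure_pmf.prob P E1"
      unfolding p_def using sum_cond_dist[of U L P X K aK i True] U finL unfolding C_def E1_def by simp
    moreover have "sum q U = measure_pmf.prob P {\<omega>. tup X L \<omega> \<in> U \<and> \<omega> \<in> E0} / measure_pmf.prob P E0"
      unfolding q_def using sum_cond_dist[of U L P X K aK i False] U finL unfolding C_def E0_def by simp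
    ultimately show ?thesis by simp
  qed
  have H: "hallc R C C p q" unfolding hallc_def
  proof (intro allI impI)
    fix A assume A: "A \<subseteq> C"
    have s1: "A \<subseteq> nb R C A" using A unfolding nb_def R_def by auto
    have s2: "nb R C A \<subseteq> C" unfolding nb_def by auto
    have up: "\<forall>x\<in>nb R C A. \<forall>y\<in>C. R x y \<longrightarrow> y \<in> nb R C A"
      unfolding nb_def R_def by (auto intro: order_trans)
    have "sum p A \<le> sum p (nb R C A)"
      using s1 s2 finC pnn by (intro sum_mono2) (auto intro: finite_subset)
    also have "\<dots> \<le> sum q (nb R C A)" using dom[OF s2 up] .
    finally show "sum p A \<le> sum q (nb R C A)" .
  qed
  obtain \<nu> where c: "coup R C C p q \<nu>"
    using hall_main[OF finC finC _ _ H] pnn qnn by blast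
  then have nn: "\<forall>x y. 0 \<le> \<nu> x y" and sup: "\<forall>x y. \<nu> x y \<noteq> 0 \<longrightarrow> x\<in>C \<and> y\<in>C \<and> R x y"
    and row: "\<forall>x\<in>C. sum (\<nu> x) C = p x" and col: "\<forall>y\<in>C. (\<Sum>x\<in>C. \<nu> x y) \<le> q y"
    unfolding coup_def by auto
  have tot: "(\<Sum>y\<in>C. \<Sum>x\<in>C. \<nu> x y) = sum q C"
  proof -
    have "(\<Sum>y\<in>C. \<Sum>x\<in>C. \<nu> x y) = (\<Sum>x\<in>C. \<Sum>y\<in>C. \<nu> x y)" by (rule sum.swap)
    also have "\<dots> = sum p C" using row by simp
    finally show ?thesis using sp sq by simp
  qed
  have col': "\<forall>y\<in>C. (\<Sum>x\<in>C. \<nu> x y) = q y"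
  proof -
    have "(\<Sum>y\<in>C. q y - (\<Sum>x\<in>C. \<nu> x y)) = 0" using tot by (simp add: sum_subtractf)
    then have "\<forall>y\<in>C. q y - (\<Sum>x\<in>C. \<nu> x y) = 0"
      using sum_nonneg_eq_0_iff[OF finC, of "\<lambda>y. q y - (\<Sum>x\<in>C. \<nu> x y)"] col by auto
    then show ?thesis by auto
  qed
  have bnd: "\<nu> x y \<le> 1" if "x \<in> C" "y \<in> C" for x y
  proof -
    have "\<nu> x y \<le> sum (\<nu> x) C" using that finC nn by (intro member_le_sum) auto
    also have "\<dots> = p x" using row that by auto
    finally show ?thesis using p1[of x] by simp
  qed
  have f1: "\<forall>x \<in> L \<rightarrow>\<^sub>E (UNIV :: bool set). \<forall>y \<in> L \<rightarrow>\<^sub>E (UNIV :: bool set).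
               0 \<le> \<nu> x y \<and> \<nu> x y \<le> 1 \<and> (\<not> (\<forall>j\<in>L. x j \<le> y j) \<longrightarrow> \<nu> x y = 0)"
    using nn bnd sup unfolding C_def R_def by blast
  have f2: "\<forall>x \<in> L \<rightarrow>\<^sub>E (UNIV :: bool set).
               cond_dist P X L K aK i True x = (\<Sum>y \<in> L \<rightarrow>\<^sub>E (UNIV :: bool set). \<nu> x y)"
    using row unfolding C_def p_def by auto
  have f3: "\<forall>y \<in> L \<rightarrow>\<^sub>E (UNIV :: bool set).
               cond_dist P X L K aK i False y = (\<Sum>x \<in> L \<rightarrow>\<^sub>E (UNIV :: bool set). \<nu> x y)"
    using col' unfolding C_def q_def by auto
  show ?thesis using f1 f2 f3 by blast
qed

end
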